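(* Let $M$ be a JBW$^*$-triple and $T:M\to M$ a bounded linear map which is triple derivable at orthogonal pairs. For each tripotent $e\in M$ put $\xi_e:=\tfrac12\big(P_2(e)T(e)+Q(e)T(e)\big)\in M_2(e)$. Let $e_1,\dots,e_{m_1}$ and $v_1,\dots,v_{m_2}$ be two families of mutually orthogonal tripotents in $M$ and $\lambda_j,\mu_k>0$ with $\sum_{j=1}^{m_1}\lambda_je_j=\sum_{k=1}^{m_2}\mu_kv_k$. Then $\sum_{j=1}^{m_1}\lambda_j\xi_{e_j}=\sum_{k=1}^{m_2}\mu_k\xi_{v_k}$.
   Context: A JB$^*$-triple is a complex Banach space with a continuous triple product $\{\cdot,\cdot,\cdot\}$, bilinear and symmetric in the outer variables and conjugate-linear in the middle one, satisfying the Jordan identity $L(a,b)L(x,y)=L(x,y)L(a,b)+L(L(a,b)x,y)-L(x,L(b,a)y)$, with $L(a,a)$ hermitian of non-negative spectrum and $\|\{a,a,a\}\|=\|a\|^3$, where $L(a,b)x=\{a,b,x\}$; a JBW$^*$-triple is a JB$^*$-triple that is a dual Banach space. Elements $a,b$ are orthogonal ($a\perp b$) if $L(a,b)=0$. A linear map $T$ is triple derivable at orthogonal pairs if $\{T(a),b,c\}+\{a,T(b),c\}+\{a,b,T(c)\}=0$ for all $a,b,c$ with $a\perp b$. A tripotent is $e$ with $\{e,e,e\}=e$; $M_2(e)=\{x:\{e,e,x\}=x\}$, $P_2(e)$ is the Peirce-2 projection, $Q(e)x=\{e,x,e\}$. (By the paper's results, $\xi_e$ is the unique self-adjoint central element of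 the JB$^*$-algebra $M_2(e)$, with product $x\circ_e y=\{x,e,y\}$ and involution $x^{*_e}=\{e,x,e\}$, such that $P_2(e)T(a)-\xi_e\circ_e a$ is a triple derivation of $M_2(e)$.) *)

theory Defs
  imports "HOL-Analysis.Analysis"
begin

text \<open>A complex Banach space is modelled as a real Banach space (type class banach)
  together with a complex scalar multiplication sc extending the real one and
  compatible with the norm.\<close>

definition complex_scalar :: "(complex \<Rightarrow> 'a::real_normed_vector \<Rightarrow> 'a) \<Rightarrow> bool" where
  "complex_scalar sc \<longleftrightarrow>
     (\<forall>c x y. sc c (x + y) = sc c x + sc c y) \<and>
     (\<forall>c d x. sc (c + d) x = sc c x + sc d x) \<and>
     (\<forall>c d x. sc (c * d) x = sc c (sc d x)) \<and>
     (\<forall>r x. sc (complex_of_real r) x = r *\<^sub>R x) \<and>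
     (\<forall>c x. norm (sc c x) = cmod c * norm x)"

definition clinear_map ::
  "(complex \<Rightarrow> 'a::plus \<Rightarrow> 'a) \<Rightarrow> (complex \<Rightarrow> 'b::plus \<Rightarrow> 'b) \<Rightarrow> ('a \<Rightarrow> 'b) \<Rightarrow> bool" where
  "clinear_map sa sb f \<longleftrightarrow>
     (\<forall>x y. f (x + y) = f x + f y) \<and> (\<forall>c x. f (sa c x) = sb c (f x))"

definition bounded_clinear_map ::
  "(complex \<Rightarrow> 'a::real_normed_vector \<Rightarrow> 'a) \<Rightarrow> (complex \<Rightarrow> 'b::real_normed_vector \<Rightarrow> 'b)
     \<Rightarrow> ('a \<Rightarrow> 'b) \<Rightarrow> bool" where
  "bounded_clinear_map sa sb f \<longleftrightarrow>
     clinear_map sa sb f \<and> (\<exists>K. \<forall>x. norm (f x) \<le> K * norm x)"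

definition bounded_cfunctional ::
  "(complex \<Rightarrow> 'p::real_normed_vector \<Rightarrow> 'p) \<Rightarrow> ('p \<Rightarrow> complex) \<Rightarrow> bool" where
  "bounded_cfunctional sp f \<longleftrightarrow> bounded_clinear_map sp (*) f"

definition dual_space_iso ::
  "(complex \<Rightarrow> 'a::real_normed_vector \<Rightarrow> 'a) \<Rightarrow> (complex \<Rightarrow> 'p::real_normed_vector \<Rightarrow> 'p)
     \<Rightarrow> ('a \<Rightarrow> 'p \<Rightarrow> complex) \<Rightarrow> bool" where
  "dual_space_iso sc sp Phi \<longleftrightarrow>
     complex_scalar sp \<and>
     (\<forall>x y. Phi (x + y) = (\<lambda>p. Phi x p + Phi y p)) \<and>
     (\<forall>c x. Phi (sc c x) = (\<lambda>p. c * Phi x p)) \<and>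
     (\<forall>x. bounded_cfunctional sp (Phi x)) \<and>
     (\<forall>x. onorm (Phi x) = norm x) \<and>
     (\<forall>f. bounded_cfunctional sp f \<longrightarrow> (\<exists>x. Phi x = f))"

definition op_exp_it ::
  "(complex \<Rightarrow> 'a::real_normed_vector \<Rightarrow> 'a) \<Rightarrow> ('a \<Rightarrow> 'a) \<Rightarrow> real \<Rightarrow> 'a \<Rightarrow> 'a" where
  "op_exp_it sc A t x = (\<Sum>n. sc ((\<i> * complex_of_real t) ^ n / of_nat (fact n)) ((A ^^ n) x))"

definition hermitian_op :: "(complex \<Rightarrow> 'a::real_normed_vector \<Rightarrow> 'a) \<Rightarrow> ('a \<Rightarrow> 'a) \<Rightarrow> bool" where
  "hermitian_op sc A \<longleftrightarrow> bounded_clinear_map sc sc A \<and>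
     (\<forall>t::real. onorm (op_exp_it sc A t) = 1)"

definition op_spectrum :: "(complex \<Rightarrow> 'a::real_normed_vector \<Rightarrow> 'a) \<Rightarrow> ('a \<Rightarrow> 'a) \<Rightarrow> complex set" where
  "op_spectrum sc A = {c. \<not> (\<exists>S. bounded_clinear_map sc sc S \<and>
        (\<forall>x. S (A x - sc c x) = x) \<and> (\<forall>x. A (S x) - sc c (S x) = x))}"

definition nonneg_spectrum :: "(complex \<Rightarrow> 'a::real_normed_vector \<Rightarrow> 'a) \<Rightarrow> ('a \<Rightarrow> 'a) \<Rightarrow> bool" where
  "nonneg_spectrum sc A \<longleftrightarrow> (\<forall>c \<in> op_spectrum sc A. Im c = 0 \<and> Re c \<ge> 0)"

text \<open>JB*-triple: tp a b c is the triple product {a,b,c}; L a b = tp a b.\<close>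

definition JB_star_triple ::
  "(complex \<Rightarrow> 'a::{real_normed_vector,banach} \<Rightarrow> 'a) \<Rightarrow> ('a \<Rightarrow> 'a \<Rightarrow> 'a \<Rightarrow> 'a) \<Rightarrow> bool" where
  "JB_star_triple sc tp \<longleftrightarrow>
     complex_scalar sc \<and>
     continuous_on UNIV (\<lambda>(a, b, c). tp a b c) \<and>
     (\<forall>b c. clinear_map sc sc (\<lambda>a. tp a b c)) \<and>
     (\<forall>a b. clinear_map sc sc (\<lambda>c. tp a b c)) \<and>
     (\<forall>a c x y. tp a (x + y) c = tp a x c + tp a y c) \<and>
     (\<forall>a c z x. tp a (sc z x) c = sc (cnj z) (tp a x c)) \<and>
     (\<forall>a b c. tp a b c = tp c b a) \<and>
     (\<forall>a b x y z. tp a b (tp x y z) =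
         tp x y (tp a b z) + tp (tp a b x) y z - tp x (tp b a y) z) \<and>
     (\<forall>a. hermitian_op sc (tp a a) \<and> nonneg_spectrum sc (tp a a)) \<and>
     (\<forall>a. norm (tp a a a) = norm a ^ 3)"

text \<open>JBW*-triple: a JB*-triple which is a dual Banach space; the predual type
  'p and the isomorphism Phi are universally quantified in the theorem.\<close>

definition JBW_star_triple ::
  "(complex \<Rightarrow> 'a::{real_normed_vector,banach} \<Rightarrow> 'a) \<Rightarrow> ('a \<Rightarrow> 'a \<Rightarrow> 'a \<Rightarrow> 'a)
     \<Rightarrow> (complex \<Rightarrow> 'p::{real_normed_vector,banach} \<Rightarrow> 'p) \<Rightarrow> ('a \<Rightarrow> 'p \<Rightarrow> complex) \<Rightarrow> bool" where
  "JBW_star_triple sc tp sp Phi \<longleftrightarrow> JB_star_triple sc tp \<and> dual_space_iso sc sp Phi"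

definition triple_orth :: "('a::zero \<Rightarrow> 'a \<Rightarrow> 'a \<Rightarrow> 'a) \<Rightarrow> 'a \<Rightarrow> 'a \<Rightarrow> bool" where
  "triple_orth tp a b \<longleftrightarrow> (\<forall>x. tp a b x = 0)"

definition triple_derivable_orth :: "('a::ab_group_add \<Rightarrow> 'a \<Rightarrow> 'a \<Rightarrow> 'a) \<Rightarrow> ('a \<Rightarrow> 'a) \<Rightarrow> bool" where
  "triple_derivable_orth tp T \<longleftrightarrow>
     (\<forall>a b c. triple_orth tp a b \<longrightarrow> tp (T a) b c + tp a (T b) c + tp a b (T c) = 0)"

definition tripotent :: "('a \<Rightarrow> 'a \<Rightarrow> 'a \<Rightarrow> 'a) \<Rightarrow> 'a \<Rightarrow> bool" where
  "tripotent tp e \<longleftrightarrow> tp e e e = e"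

definition Qop :: "('a \<Rightarrow> 'a \<Rightarrow> 'a \<Rightarrow> 'a) \<Rightarrow> 'a \<Rightarrow> 'a \<Rightarrow> 'a" where
  "Qop tp e x = tp e x e"

definition P2 :: "('a \<Rightarrow> 'a \<Rightarrow> 'a \<Rightarrow> 'a) \<Rightarrow> 'a \<Rightarrow> 'a \<Rightarrow> 'a" where
  "P2 tp e x = Qop tp e (Qop tp e x)"

definition xi :: "('a::real_vector \<Rightarrow> 'a \<Rightarrow> 'a \<Rightarrow> 'a) \<Rightarrow> ('a \<Rightarrow> 'a) \<Rightarrow> 'a \<Rightarrow> 'a" where
  "xi tp T e = (1/2::real) *\<^sub>R (P2 tp e (T e) + Qop tp e (T e))"

end

theory Submission
  imports Defs
begin

locale jt =
  fixes tp :: "'a::real_vector \<Rightarrow> 'a \<Rightarrow> 'a \<Rightarrow> 'a"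
  assumes add1: "tp (x+y) b c = tp x b c + tp y b c"
    and add2: "tp a (x+y) c = tp a x c + tp a y c"
    and add3: "tp a b (x+y) = tp a b x + tp a b y"
    and sc1: "tp (r *\<^sub>R a) b c = r *\<^sub>R tp a b c"
    and sc2: "tp a (r *\<^sub>R b) c = r *\<^sub>R tp a b c"
    and sc3: "tp a b (r *\<^sub>R c) = r *\<^sub>R tp a b c"
    and sym: "tp a b c = tp c b a"
    and JI: "tp a b (tp x y z) = tp x y (tp a b z) + tp (tp a b x) y z - tp x (tp b a y) z"
begin

lemma z1[simp]: "tp 0 b c = 0" using sc1[of 0 0 b c] by simp
lemma z2[simp]: "tp a 0 c = 0" using sc2[of a 0 0 c] by simp
lemma z3[simp]: "tp a b 0 = 0" using sc3[of a b 0 0] by simp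
lemma n1: "tp (-x) b c = - tp x b c" using sc1[of "-1" x b c] by simp
lemma n2: "tp a (-x) c = - tp a x c" using sc2[of a "-1" x c] by simp
lemma n3: "tp a b (-x) = - tp a b x" using sc3[of a b "-1" x] by simp

lemma d3: "tp a b (x - y) = tp a b x - tp a b y"
  using add3[of a b x "-y"] n3[of a b y] by simp

lemma s1: "finite S \<Longrightarrow> tp (sum g S) b c = (\<Sum>i\<in>S. tp (g i) b c)"
  by (induction S rule: finite_induct) (auto simp: add1)
lemma s2: "finite S \<Longrightarrow> tp a (sum g S) c = (\<Sum>i\<in>S. tp a (g i) c)"
  by (induction S rule: finite_induct) (auto simp: add2)
lemma s3: "finite S \<Longrightarrow> tp a b (sum g S) = (\<Sum>i\<in>S. tp a b (g i))"
  by (induction S rule: finite_induct) (auto simp: add3)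

definition orth where "orth a b \<longleftrightarrow> (\<forall>x. tp a b x = 0)"

lemma basic:
  assumes te: "tp e e e = e" and oef: "orth e f" and ofe: "orth f e"
  shows F3: "tp f (tp e z e) f = 0"
    and F4: "tp e (tp e w e) f = 0"
    and F5: "tp e (tp e x f) e = 0"
    and F6: "2 *\<^sub>R tp e (tp e e y) f = tp e y f"
proof -
  have ef: "\<And>x. tp e f x = 0" and fe: "\<And>x. tp f e x = 0" using oef ofe by (auto simp: orth_def)
  have "tp z e (tp f e f) = tp f e (tp z e f) + tp (tp z e f) e f - tp f (tp e z e) f" by (rule JI)
  moreover have "tp (tp z e f) e f = 0" using sym fe by metis
  ultimately show "tp f (tp e z e) f = 0" using fe by simp
  have "tp w e (tp e e f) = tp e e (tp w e f) + tp (tp w e e) e f - tp e (tp e w e) f" by (rule JI)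
  moreover have "tp e e f = 0" "tp w e f = 0" "tp (tp w e e) e f = 0" using sym fe by metis+
  ultimately show "tp e (tp e w e) f = 0" by simp
  have "tp x e (tp e f e) = tp e f (tp x e e) + tp (tp x e e) f e - tp e (tp e x f) e" by (rule JI)
  moreover have "tp (tp x e e) f e = 0" using sym ef by metis
  ultimately show "tp e (tp e x f) e = 0" using ef by simp
  have i1: "tp e e (tp e y f) = tp e y (tp e e f) + tp (tp e e e) y f - tp e (tp e e y) f" by (rule JI)
  have i2: "tp e y (tp e e f) = tp e e (tp e y f) + tp (tp e y e) e f - tp e (tp y e e) f" by (rule JI)
  have "tp e e f = 0" "tp (tp e y e) e f = 0" "tp y e e = tp e e y" using sym fe by metis+
  with i1 i2 te show "2 *\<^sub>R tp e (tp e e y) f = tp e y f"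
    by (simp add: scaleR_2 algebra_simps)
qed

lemma xi_add:
  fixes T
  assumes te: "tp e e e = e" and tf: "tp f f f = f" and oef: "orth e f" and ofe: "orth f e"
    and Tadd: "\<And>x y. T (x+y) = T x + T y"
    and der: "triple_derivable_orth tp T"
  shows "tp (e+f) (e+f) (e+f) = e+f"
    and "xi tp T (e+f) = xi tp T e + xi tp T f"
proof -
  have ef: "\<And>x. tp e f x = 0" and fe: "\<And>x. tp f e x = 0" using oef ofe by (auto simp: orth_def)
  have ef2: "\<And>x. tp x f e = 0" "\<And>x. tp x e f = 0" using ef fe sym by metis+
  show "tp (e+f) (e+f) (e+f) = e+f" using te tf ef fe ef2 by (simp add: add1 add2 add3)
  have D: "\<And>a b c. orth a b \<Longrightarrow> tp (T a) b c + tp a (T b) c + tp a b (T c) = 0"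
    using der unfolding triple_derivable_orth_def triple_orth_def orth_def by blast
  have F1: "tp e (T f) e = 0" using D[OF oef, of e] ef ef2 by simp
  have F2: "tp f (T e) f = 0" using D[OF ofe, of f] fe ef2 by simp
  have F7: "tp e (T e) f = - tp e e (T f)"
  proof -
    have "tp (T f) e e + tp f (T e) e + tp f e (T e) = 0" using D[OF ofe] .
    moreover have "tp (T f) e e = tp e e (T f)" "tp f (T e) e = tp e (T e) f" using sym by metis+
    ultimately show ?thesis using fe by (simp add: eq_neg_iff_add_eq_0 add.commute)
  qed
  have F8: "tp e (T f) f = - tp f f (T e)"
  proof -
    have "tp (T e) f f + tp e (T f) f + tp e f (T f) = 0" using D[OF oef] .
    moreover have "tp (T e) f f = tp f f (T e)" using sym by metis
    ultimately show ?thesis using ef by (simp add: eq_neg_iff_add_eq_0 add.commute)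
  qed
  note B1 = basic[OF te oef ofe] and B2 = basic[OF tf ofe oef]
  define x where "x = T e + T f"
  define c where "c = tp e x f"
  have Tu: "T (e+f) = x" using Tadd x_def by simp
  have sfe: "\<And>y. tp f y e = tp e y f" using sym by metis
  have Qu: "\<And>y. tp (e+f) y (e+f) = tp e y e + tp f y f + 2 *\<^sub>R tp e y f"
    by (simp add: add1 add3 sfe scaleR_2)
  have c2: "2 *\<^sub>R tp e c f = - c"
  proof -
    have "tp e c f = tp e (tp e (T e) f) f + tp e (tp e (T f) f) f"
      by (simp add: c_def x_def add2 add1 add3)
    also have "\<dots> = - tp e (tp e e (T f)) f - tp e (tp f f (T e)) f"
      by (simp add: F7 F8 n2)
    finally have h: "tp e c f = - tp e (tp e e (T f)) f - tp e (tp f f (T e)) f" .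
    have "2 *\<^sub>R tp e c f = - (2 *\<^sub>R tp e (tp e e (T f)) f) - (2 *\<^sub>R tp e (tp f f (T e)) f)"
      by (subst h) (simp add: scaleR_right_diff_distrib)
    also have "2 *\<^sub>R tp e (tp f f (T e)) f = tp e (T e) f"
      using B2(4)[of "T e"] sfe by (metis sym)
    also have "2 *\<^sub>R tp e (tp e e (T f)) f = tp e (T f) f" using B1(4) .
    finally show ?thesis by (simp add: c_def x_def add2)
  qed
  have Qx: "tp (e+f) x (e+f) = tp e (T e) e + tp f (T f) f + 2 *\<^sub>R c"
    unfolding Qu c_def by (simp add: x_def add2 F1 F2)
  have Pc: "tp (e+f) c (e+f) = - c"
    unfolding Qu using c2 B1(3)[of x] B2(3)[of x] sfe by (simp add: c_def)
  have PA: "tp (e+f) (tp e (T e) e + tp f (T f) f) (e+f) = tp e (tp e (T e) e) e + tp f (tp f (T f) f) f"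
  proof -
    have a: "tp f (tp e (T e) e) f = 0" "tp e (tp f (T f) f) e = 0" using B1(1) B2(1) by auto
    have b: "tp e (tp e (T e) e) f = 0" "tp e (tp f (T f) f) f = 0" using B1(2) B2(2) sfe by metis+
    have "tp (e+f) (tp e (T e) e + tp f (T f) f) (e+f) = tp (e+f) (tp e (T e) e) (e+f) + tp (e+f) (tp f (T f) f) (e+f)"
      by (rule add2)
    also have "\<dots> = (tp e (tp e (T e) e) e + tp f (tp e (T e) e) f + 2 *\<^sub>R tp e (tp e (T e) e) f)
       + (tp e (tp f (T f) f) e + tp f (tp f (T f) f) f + 2 *\<^sub>R tp e (tp f (T f) f) f)"
      by (simp only: Qu)
    finally show ?thesis using a b by simp
  qed
  have P2u: "P2 tp (e+f) x = tp e (tp e (T e) e) e + tp f (tp f (T f) f) f - 2 *\<^sub>R c"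
  proof -
    have "P2 tp (e+f) x = tp (e+f) (tp e (T e) e + tp f (T f) f) (e+f) + tp (e+f) (2 *\<^sub>R c) (e+f)"
      unfolding P2_def Qop_def Qx by (rule add2)
    also have "\<dots> = tp e (tp e (T e) e) e + tp f (tp f (T f) f) f - 2 *\<^sub>R c"
      by (simp only: PA sc2 Pc) simp
    finally show ?thesis .
  qed
  show "xi tp T (e+f) = xi tp T e + xi tp T f"
    unfolding xi_def Tu P2u Qop_def Qx by (simp add: P2_def Qop_def algebra_simps)
qed


lemma sum_xi:
  fixes e :: "nat \<Rightarrow> 'a" and m :: nat
  assumes tri: "\<forall>j<m. tp (e j) (e j) (e j) = e j"
    and ort: "\<forall>j<m. \<forall>k<m. j \<noteq> k \<longrightarrow> orth (e j) (e k)"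
    and Tadd: "\<And>x y. T (x+y) = T x + T y"
    and der: "triple_derivable_orth tp T"
    and S: "S \<subseteq> {..<m}"
  shows "tp (sum e S) (sum e S) (sum e S) = sum e S \<and> xi tp T (sum e S) = (\<Sum>j\<in>S. xi tp T (e j))"
proof -
  have T0: "T 0 = 0" using Tadd[of 0 0] by simp
  have "finite S" using finite_subset[OF S] by simp
  then show ?thesis using S
  proof (induction S rule: finite_induct)
    case empty
    then show ?case by (simp add: xi_def P2_def Qop_def T0)
  next
    case (insert k S)
    have k: "k < m" and Sm: "S \<subseteq> {..<m}" "k \<notin> S" using insert.prems insert.hyps(2) by auto
    have IH: "tp (sum e S) (sum e S) (sum e S) = sum e S" "xi tp T (sum e S) = (\<Sum>j\<in>S. xi tp T (e j))"
      using insert.IH Sm(1) by blast+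
    have o1: "orth (e k) (sum e S)" unfolding orth_def
    proof
      fix x
      have "tp (e k) (sum e S) x = (\<Sum>j\<in>S. tp (e k) (e j) x)" using s2 insert.hyps(1) by blast
      also have "\<dots> = 0"
      proof (rule sum.neutral, rule ballI)
        fix j assume "j \<in> S"
        then have "j < m" "j \<noteq> k" using Sm by auto
        then show "tp (e k) (e j) x = 0" using ort k unfolding orth_def by blast
      qed
      finally show "tp (e k) (sum e S) x = 0" .
    qed
    have o2: "orth (sum e S) (e k)" unfolding orth_def
    proof
      fix x
      have "tp (sum e S) (e k) x = (\<Sum>j\<in>S. tp (e j) (e k) x)" using s1 insert.hyps(1) by blast
      also have "\<dots> = 0"
      proof (rule sum.neutral, rule ballI)
        fix j assume "j \<in> S"
        then have "j < m" "j \<noteq> k" using Sm by auto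
        then show "tp (e j) (e k) x = 0" using ort k unfolding orth_def by blast
      qed
      finally show "tp (sum e S) (e k) x = 0" .
    qed
    have tk: "tp (e k) (e k) (e k) = e k" using tri k by blast
    have se: "sum e (insert k S) = e k + sum e S" using insert.hyps by simp
    have sx: "(\<Sum>j\<in>insert k S. xi tp T (e j)) = xi tp T (e k) + (\<Sum>j\<in>S. xi tp T (e j))"
      using insert.hyps by simp
    show ?case unfolding se sx using xi_add[OF tk IH(1) o1 o2 Tadd der] IH(2) by simp
  qed
qed

lemma eig:
  fixes e :: "nat \<Rightarrow> 'a" and m :: nat
  assumes tri: "\<forall>j<m. tp (e j) (e j) (e j) = e j"
    and ort: "\<forall>j<m. \<forall>k<m. j \<noteq> k \<longrightarrow> orth (e j) (e k)"
    and a: "a = (\<Sum>j<m. lam j *\<^sub>R e j)" and k: "k < m"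
  shows "tp a a (e k) = (lam k)^2 *\<^sub>R e k"
proof -
  have h1: "tp (e k) a y = lam k *\<^sub>R tp (e k) (e k) y" for y
  proof -
    have "tp (e k) a y = (\<Sum>j<m. lam j *\<^sub>R tp (e k) (e j) y)" unfolding a by (simp add: s2 sc2)
    also have "\<dots> = (\<Sum>j<m. if j = k then lam k *\<^sub>R tp (e k) (e k) y else 0)"
      using ort k by (intro sum.cong) (auto simp: orth_def)
    also have "\<dots> = lam k *\<^sub>R tp (e k) (e k) y" using k by (simp add: sum.delta)
    finally show ?thesis .
  qed
  have h2: "tp (e k) (e k) a = lam k *\<^sub>R e k"
  proof -
    have "tp (e k) (e k) a = (\<Sum>j<m. lam j *\<^sub>R tp (e k) (e k) (e j))" unfolding a by (simp add: s3 sc3)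
    also have "\<dots> = (\<Sum>j<m. if j = k then lam k *\<^sub>R e k else 0)"
    proof (intro sum.cong refl)
      fix j assume j: "j \<in> {..<m}"
      show "lam j *\<^sub>R tp (e k) (e k) (e j) = (if j = k then lam k *\<^sub>R e k else 0)"
      proof (cases "j = k")
        case True then show ?thesis using tri k by simp
      next
        case False
        then have "tp (e j) (e k) (e k) = 0" using ort j k by (auto simp: orth_def)
        moreover have "tp (e k) (e k) (e j) = tp (e j) (e k) (e k)" by (rule sym)
        ultimately show ?thesis using False by simp
      qed
    qed
    also have "\<dots> = lam k *\<^sub>R e k" using k by (simp add: sum.delta)
    finally show ?thesis .
  qed
  have "tp a a (e k) = tp (e k) a a" by (rule sym)
  also have "\<dots> = (lam k)^2 *\<^sub>R e k" using h1 h2 by (simp add: power2_eq_square)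
  finally show ?thesis .
qed

end

lemma indep:
  fixes D :: "'a::real_vector \<Rightarrow> 'a"
  assumes Dadd: "\<And>x y. D (x+y) = D x + D y" and Dsc: "\<And>r x. D (r *\<^sub>R x) = r *\<^sub>R D x"
    and fin: "finite V"
  shows "(\<forall>t\<in>V. D (x t) = (t^2) *\<^sub>R x t) \<Longrightarrow> (\<forall>s\<in>V. \<forall>t\<in>V. s \<noteq> t \<longrightarrow> s^2 \<noteq> t^2)
     \<Longrightarrow> sum x V = 0 \<Longrightarrow> \<forall>t\<in>V. x t = 0"
  using fin
proof (induction V arbitrary: x rule: finite_induct)
  case empty then show ?case by simp
next
  case (insert s V)
  have Dsum: "\<And>g. D (sum g V) = (\<Sum>t\<in>V. D (g t))"
  proof -
    fix g
    show "D (sum g V) = (\<Sum>t\<in>V. D (g t))" using insert(1)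
      by (induction V rule: finite_induct) (auto simp: Dadd Dsc[of 0 0, simplified])
  qed
  have sx: "x s = - sum x V" using insert by (simp add: add_eq_0_iff)
  define y where "y t = (t^2 - s^2) *\<^sub>R x t" for t
  have "D (sum x V) = (\<Sum>t\<in>V. t^2 *\<^sub>R x t)" using Dsum insert by simp
  moreover have "D (x s) = s^2 *\<^sub>R x s" using insert by simp
  ultimately have "(\<Sum>t\<in>V. t^2 *\<^sub>R x t) = s^2 *\<^sub>R sum x V"
    using sx Dsc[of "-1"] by (simp add: scaleR_sum_right)
  then have "sum y V = 0" unfolding y_def
    by (simp add: scaleR_diff_left sum_subtractf scaleR_sum_right)
  moreover have "\<forall>t\<in>V. D (y t) = (t^2) *\<^sub>R y t" using insert by (simp add: y_def Dsc)
  moreover have "\<forall>s\<in>V. \<forall>t\<in>V. s \<noteq> t \<longrightarrow> s^2 \<noteq> t^2" using insert by auto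
  ultimately have "\<forall>t\<in>V. y t = 0" using insert.IH by blast
  moreover have "\<forall>t\<in>V. t^2 \<noteq> s^2" using insert.hyps(2) insert.prems(2) by (metis insertCI)
  ultimately have "\<forall>t\<in>V. x t = 0" by (simp add: y_def)
  then show ?case using sx by simp
qed


theorem mainTheorem13:
  fixes sc :: "complex \<Rightarrow> 'a::{real_normed_vector,banach} \<Rightarrow> 'a"
    and tp :: "'a \<Rightarrow> 'a \<Rightarrow> 'a \<Rightarrow> 'a"
    and sp :: "complex \<Rightarrow> 'p::{real_normed_vector,banach} \<Rightarrow> 'p"
    and Phi :: "'a \<Rightarrow> 'p \<Rightarrow> complex"
    and T :: "'a \<Rightarrow> 'a"
    and e v :: "nat \<Rightarrow> 'a"
    and lam mu :: "nat \<Rightarrow> real"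
    and m1 m2 :: nat
  assumes "JBW_star_triple sc tp sp Phi"
    and "bounded_clinear_map sc sc T"
    and "triple_derivable_orth tp T"
    and "\<forall>j<m1. tripotent tp (e j)"
    and "\<forall>j<m1. \<forall>k<m1. j \<noteq> k \<longrightarrow> triple_orth tp (e j) (e k)"
    and "\<forall>k<m2. tripotent tp (v k)"
    and "\<forall>j<m2. \<forall>k<m2. j \<noteq> k \<longrightarrow> triple_orth tp (v j) (v k)"
    and "\<forall>j<m1. lam j > 0"
    and "\<forall>k<m2. mu k > 0"
    and "(\<Sum>j<m1. lam j *\<^sub>R e j) = (\<Sum>k<m2. mu k *\<^sub>R v k)"
  shows "(\<Sum>j<m1. lam j *\<^sub>R xi tp T (e j)) = (\<Sum>k<m2. mu k *\<^sub>R xi tp T (v k))"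
proof -
  have JB: "JB_star_triple sc tp" using assms(1) by (simp add: JBW_star_triple_def)
  note JBd = JB[unfolded JB_star_triple_def]
  note cs = JBd[THEN conjunct1]
  have scr: "\<And>r x. sc (complex_of_real r) x = r *\<^sub>R x" using cs by (simp add: complex_scalar_def)
  note L1 = JBd[THEN conjunct2, THEN conjunct2, THEN conjunct1]
  note L3 = JBd[THEN conjunct2, THEN conjunct2, THEN conjunct2, THEN conjunct1]
  note M2 = JBd[THEN conjunct2, THEN conjunct2, THEN conjunct2, THEN conjunct2, THEN conjunct1]
  note M2s = JBd[THEN conjunct2, THEN conjunct2, THEN conjunct2, THEN conjunct2, THEN conjunct2, THEN conjunct1]
  note Sy = JBd[THEN conjunct2, THEN conjunct2, THEN conjunct2, THEN conjunct2, THEN conjunct2, THEN conjunct2, THEN conjunct1]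
  note JJ = JBd[THEN conjunct2, THEN conjunct2, THEN conjunct2, THEN conjunct2, THEN conjunct2, THEN conjunct2, THEN conjunct2, THEN conjunct1]
  interpret jt tp
  proof
    fix x y b c a :: 'a and r :: real
    show "tp (x + y) b c = tp x b c + tp y b c" using L1 unfolding clinear_map_def by blast
    show "tp a (x + y) c = tp a x c + tp a y c" using M2 by blast
    show "tp a b (x + y) = tp a b x + tp a b y" using L3 unfolding clinear_map_def by blast
    show "tp (r *\<^sub>R a) b c = r *\<^sub>R tp a b c"
    proof -
      have "tp (sc (complex_of_real r) a) b c = sc (complex_of_real r) (tp a b c)"
        using L1 unfolding clinear_map_def by blast
      then show ?thesis by (simp only: scr)
    qed
    show "tp a (r *\<^sub>R b) c = r *\<^sub>R tp a b c"
    proof -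
      have "tp a (sc (complex_of_real r) b) c = sc (cnj (complex_of_real r)) (tp a b c)"
        using M2s by blast
      then show ?thesis by (simp only: scr complex_cnj_complex_of_real)
    qed
    show "tp a b (r *\<^sub>R c) = r *\<^sub>R tp a b c"
    proof -
      have "tp a b (sc (complex_of_real r) c) = sc (complex_of_real r) (tp a b c)"
        using L3 unfolding clinear_map_def by blast
      then show ?thesis by (simp only: scr)
    qed
  next
    fix a b c :: 'a
    show "tp a b c = tp c b a" using Sy by blast
  next
    fix a b x y z :: 'a
    show "tp a b (tp x y z) = tp x y (tp a b z) + tp (tp a b x) y z - tp x (tp b a y) z" using JJ by blast
  qed
  have Tadd: "\<And>x y. T (x+y) = T x + T y" using assms(2) by (simp add: bounded_clinear_map_def clinear_map_def)
  have triE: "\<forall>j<m1. tp (e j) (e j) (e j) = e j" using assms(4) by (simp add: tripotent_def)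
  have triV: "\<forall>j<m2. tp (v j) (v j) (v j) = v j" using assms(6) by (simp add: tripotent_def)
  have ortE: "\<forall>j<m1. \<forall>k<m1. j \<noteq> k \<longrightarrow> orth (e j) (e k)" using assms(5) by (simp add: orth_def triple_orth_def)
  have ortV: "\<forall>j<m2. \<forall>k<m2. j \<noteq> k \<longrightarrow> orth (v j) (v k)" using assms(7) by (simp add: orth_def triple_orth_def)
  define a where "a = (\<Sum>j<m1. lam j *\<^sub>R e j)"
  have a2: "a = (\<Sum>k<m2. mu k *\<^sub>R v k)" using assms(10) a_def by simp
  define V where "V = lam ` {..<m1} \<union> mu ` {..<m2}"
  have finV: "finite V" unfolding V_def by simp
  have Vpos: "\<forall>t\<in>V. t > 0" unfolding V_def using assms(8,9) by auto
  define E where "E t = sum e {j. j \<in> {..<m1} \<and> lam j = t}" for t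
  define F where "F t = sum v {j. j \<in> {..<m2} \<and> mu j = t}" for t
  have lamV: "lam ` {..<m1} \<subseteq> V" and muV: "mu ` {..<m2} \<subseteq> V" unfolding V_def by auto
  have G1: "(\<Sum>j<m1. lam j *\<^sub>R xi tp T (e j)) = (\<Sum>t\<in>V. t *\<^sub>R xi tp T (E t))"
  proof -
    have "(\<Sum>j<m1. lam j *\<^sub>R xi tp T (e j)) =
        (\<Sum>t\<in>V. \<Sum>j\<in>{j. j \<in> {..<m1} \<and> lam j = t}. lam j *\<^sub>R xi tp T (e j))"
      using sum.group[OF _ finV lamV, of "\<lambda>j. lam j *\<^sub>R xi tp T (e j)"] by simp
    also have "\<dots> = (\<Sum>t\<in>V. t *\<^sub>R xi tp T (E t))"
    proof (rule sum.cong[OF refl])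
      fix t
      have sub: "{j. j \<in> {..<m1} \<and> lam j = t} \<subseteq> {..<m1}" by auto
      have "(\<Sum>j\<in>{j. j \<in> {..<m1} \<and> lam j = t}. lam j *\<^sub>R xi tp T (e j))
          = (\<Sum>j\<in>{j. j \<in> {..<m1} \<and> lam j = t}. t *\<^sub>R xi tp T (e j))" by (rule sum.cong) auto
      also have "\<dots> = t *\<^sub>R (\<Sum>j\<in>{j. j \<in> {..<m1} \<and> lam j = t}. xi tp T (e j))"
        by (simp add: scaleR_sum_right)
      also have "\<dots> = t *\<^sub>R xi tp T (E t)"
        using sum_xi[OF triE ortE Tadd assms(3) sub] unfolding E_def by simp
      finally show "(\<Sum>j\<in>{j. j \<in> {..<m1} \<and> lam j = t}. lam j *\<^sub>R xi tp T (e j)) = t *\<^sub>R xi tp T (E t)" .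
    qed
    finally show ?thesis .
  qed
  have G2: "(\<Sum>j<m2. mu j *\<^sub>R xi tp T (v j)) = (\<Sum>t\<in>V. t *\<^sub>R xi tp T (F t))"
  proof -
    have "(\<Sum>j<m2. mu j *\<^sub>R xi tp T (v j)) =
        (\<Sum>t\<in>V. \<Sum>j\<in>{j. j \<in> {..<m2} \<and> mu j = t}. mu j *\<^sub>R xi tp T (v j))"
      using sum.group[OF _ finV muV, of "\<lambda>j. mu j *\<^sub>R xi tp T (v j)"] by simp
    also have "\<dots> = (\<Sum>t\<in>V. t *\<^sub>R xi tp T (F t))"
    proof (rule sum.cong[OF refl])
      fix t
      have sub: "{j. j \<in> {..<m2} \<and> mu j = t} \<subseteq> {..<m2}" by auto
      have "(\<Sum>j\<in>{j. j \<in> {..<m2} \<and> mu j = t}. mu j *\<^sub>R xi tp T (v j))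
          = (\<Sum>j\<in>{j. j \<in> {..<m2} \<and> mu j = t}. t *\<^sub>R xi tp T (v j))" by (rule sum.cong) auto
      also have "\<dots> = t *\<^sub>R (\<Sum>j\<in>{j. j \<in> {..<m2} \<and> mu j = t}. xi tp T (v j))"
        by (simp add: scaleR_sum_right)
      also have "\<dots> = t *\<^sub>R xi tp T (F t)"
        using sum_xi[OF triV ortV Tadd assms(3) sub] unfolding F_def by simp
      finally show "(\<Sum>j\<in>{j. j \<in> {..<m2} \<and> mu j = t}. mu j *\<^sub>R xi tp T (v j)) = t *\<^sub>R xi tp T (F t)" .
    qed
    finally show ?thesis .
  qed
  have A1: "a = (\<Sum>t\<in>V. t *\<^sub>R E t)"
  proof -
    have "a = (\<Sum>t\<in>V. \<Sum>j\<in>{j. j \<in> {..<m1} \<and> lam j = t}. lam j *\<^sub>R e j)"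
      unfolding a_def using sum.group[OF _ finV lamV, of "\<lambda>j. lam j *\<^sub>R e j"] by simp
    also have "\<dots> = (\<Sum>t\<in>V. t *\<^sub>R E t)"
    proof (rule sum.cong[OF refl])
      fix t
      have "(\<Sum>j\<in>{j. j \<in> {..<m1} \<and> lam j = t}. lam j *\<^sub>R e j)
          = (\<Sum>j\<in>{j. j \<in> {..<m1} \<and> lam j = t}. t *\<^sub>R e j)" by (rule sum.cong) auto
      then show "(\<Sum>j\<in>{j. j \<in> {..<m1} \<and> lam j = t}. lam j *\<^sub>R e j) = t *\<^sub>R E t"
        unfolding E_def by (simp add: scaleR_sum_right)
    qed
    finally show ?thesis .
  qed
  have A2: "a = (\<Sum>t\<in>V. t *\<^sub>R F t)"
  proof -
    have "a = (\<Sum>t\<in>V. \<Sum>j\<in>{j. j \<in> {..<m2} \<and> mu j = t}. mu j *\<^sub>R v j)"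
      unfolding a2 using sum.group[OF _ finV muV, of "\<lambda>j. mu j *\<^sub>R v j"] by simp
    also have "\<dots> = (\<Sum>t\<in>V. t *\<^sub>R F t)"
    proof (rule sum.cong[OF refl])
      fix t
      have "(\<Sum>j\<in>{j. j \<in> {..<m2} \<and> mu j = t}. mu j *\<^sub>R v j)
          = (\<Sum>j\<in>{j. j \<in> {..<m2} \<and> mu j = t}. t *\<^sub>R v j)" by (rule sum.cong) auto
      then show "(\<Sum>j\<in>{j. j \<in> {..<m2} \<and> mu j = t}. mu j *\<^sub>R v j) = t *\<^sub>R F t"
        unfolding F_def by (simp add: scaleR_sum_right)
    qed
    finally show ?thesis .
  qed
  have EE: "tp a a (E t) = t^2 *\<^sub>R E t" for t
  proof -
    have "tp a a (E t) = (\<Sum>j\<in>{j. j \<in> {..<m1} \<and> lam j = t}. tp a a (e j))"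
      unfolding E_def by (simp add: s3)
    also have "\<dots> = (\<Sum>j\<in>{j. j \<in> {..<m1} \<and> lam j = t}. t^2 *\<^sub>R e j)"
      by (rule sum.cong) (auto simp: eig[OF triE ortE a_def])
    finally show ?thesis unfolding E_def by (simp add: scaleR_sum_right)
  qed
  have FF: "tp a a (F t) = t^2 *\<^sub>R F t" for t
  proof -
    have "tp a a (F t) = (\<Sum>j\<in>{j. j \<in> {..<m2} \<and> mu j = t}. tp a a (v j))"
      unfolding F_def by (simp add: s3)
    also have "\<dots> = (\<Sum>j\<in>{j. j \<in> {..<m2} \<and> mu j = t}. t^2 *\<^sub>R v j)"
      by (rule sum.cong) (auto simp: eig[OF triV ortV a2])
    finally show ?thesis unfolding F_def by (simp add: scaleR_sum_right)
  qed
  define x where "x t = t *\<^sub>R (E t - F t)" for t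
  have "\<forall>t\<in>V. x t = 0"
  proof (rule indep[of "tp a a"])
    show "\<And>x y. tp a a (x + y) = tp a a x + tp a a y" by (rule add3)
    show "\<And>r x. tp a a (r *\<^sub>R x) = r *\<^sub>R tp a a x" by (rule sc3)
    show "finite V" by (rule finV)
    show "\<forall>t\<in>V. tp a a (x t) = t\<^sup>2 *\<^sub>R x t"
    proof
      fix t assume "t \<in> V"
      have "tp a a (x t) = t *\<^sub>R (t^2 *\<^sub>R E t - t^2 *\<^sub>R F t)"
        unfolding x_def by (simp only: sc3 d3 EE FF)
      then show "tp a a (x t) = t\<^sup>2 *\<^sub>R x t"
        unfolding x_def by (simp add: scaleR_diff_right mult.commute)
    qed
    show "\<forall>s\<in>V. \<forall>t\<in>V. s \<noteq> t \<longrightarrow> s\<^sup>2 \<noteq> t\<^sup>2"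
      using Vpos by (metis less_imp_le power2_eq_iff_nonneg)
    show "sum x V = 0" unfolding x_def using A1 A2
      by (simp add: scaleR_diff_right sum_subtractf)
  qed
  then have "\<forall>t\<in>V. E t = F t" using Vpos unfolding x_def by auto
  then show ?thesis unfolding G1 G2 by (intro sum.cong) auto
qed

end
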